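(* Let $\mathbb{P}$ be a class of closed formulas, and let $P$ be a proof in $\mathbf{FBI}^{\mathbb{P}}$ of a safety problem $\Pi$. Then $\operatorname{Inv}^\rightleftharpoons(P)$ is a safe inductive invariant of $\Pi$, and if $P$ contains $n\in\mathbb{N}$ instances of the rule (Ind), then $\operatorname{Inv}^\rightleftharpoons(P)$ is a Boolean combination of $n$ predicates from $\mathbb{P}$.
   Context: A first-order vocabulary $\Sigma$ consists of constant, function and relation symbols; $\Sigma'=\{a' : a\in\Sigma\}$ is a disjoint copy, and for a formula $\varphi$ over $\Sigma$, $\varphi'$ denotes $\varphi$ with every symbol replaced by its primed copy. A safety problem is a triple $(\iota,\tau,\beta)$, where $\iota,\beta$ are closed formulas over $\Sigma$ and $\tau$ is a closed formula over $\Sigma\uplus\Sigma'$. $A\Rightarrow B$ means the implication $A\to B$ is valid. $\tau^{-1}$ denotes $\tau$ with each symbol of $\Sigma$ and its primed counterpart swapped. A closed formula $\varphi$ over $\Sigma$ is a safe inductive invariant of $(\iota,\tau,\beta)$ if $\iota\Rightarrow\varphi$, $\varphi\wedge\tau\Rightarrow\varphi'$ and $\varphi\Rightarrow\neg\beta$. Proofs: a proof of $\Pi$ in a system is a finite tree whose nodes are safety problems, whose root is $\Pi$, and in which each node together with its children is an instance of one of the system's rules, with side conditions valid. $\mathbf{FBI}$ has the rules ($\varphi$ ranges over closed formulas over $\Sigma$): (Ind): no premises; conclusion $(\iota,\tau,\neg\varphi)$; side conditions $\iota\Rightarrow\varphi$ and $\varphi\wedge\tau\Rightarrow\varphi'$.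 (Cons): premise $(\iota,\tau,\neg\varphi)$; conclusion $(\iota,\tau,\beta)$; side condition $\varphi\Rightarrow\neg\beta$. (Inc): premises $(\iota,\tau,\neg\varphi)$ and $(\iota\wedge\varphi,\ \tau\wedge\varphi\wedge\varphi',\ \beta\wedge\varphi)$; conclusion $(\iota,\tau,\beta)$. (Rev): premise $(\beta,\tau^{-1},\iota)$; conclusion $(\iota,\tau,\beta)$. $\mathbf{FBI}^{\mathbb{P}}$ is $\mathbf{FBI}$ with applications of (Ind) restricted to $\varphi\in\mathbb{P}$. $\operatorname{Inv}^\rightleftharpoons(P)$ is defined by induction on $P$: if the root is the conclusion $(\iota,\tau,\neg\varphi)$ of (Ind), it is $\varphi$; if the root is the conclusion of (Cons) with premise proof $\tilde P$, it is $\operatorname{Inv}^\rightleftharpoons(\tilde P)$; if the root is the conclusion of (Inc) with premise proofs $P_1,P_2$, it is $\operatorname{Inv}^\rightleftharpoons(P_1)\wedge\operatorname{Inv}^\rightleftharpoons(P_2)$; if the root is the conclusion of (Rev) with premise proof $\tilde P$, it is $\neg\operatorname{Inv}^\rightleftharpoons(\tilde P)$. *)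

theory Defs
  imports Main
begin

datatype 'f tm = Var nat | App 'f "'f tm list"

datatype ('f, 'r) fm =
    FF | TT
  | Atom 'r "'f tm list"
  | Eq "'f tm" "'f tm"
  | Neg "('f, 'r) fm"
  | Conj "('f, 'r) fm" "('f, 'r) fm"
  | Disj "('f, 'r) fm" "('f, 'r) fm"
  | Imp "('f, 'r) fm" "('f, 'r) fm"
  | Ex nat "('f, 'r) fm"
  | All nat "('f, 'r) fm"

fun fv_tm :: "'f tm \<Rightarrow> nat set" where
  "fv_tm (Var n) = {n}"
| "fv_tm (App f ts) = (\<Union>t\<in>set ts. fv_tm t)"

fun fv :: "('f, 'r) fm \<Rightarrow> nat set" where
  "fv FF = {}"
| "fv TT = {}"
| "fv (Atom r ts) = (\<Union>t\<in>set ts. fv_tm t)"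
| "fv (Eq s t) = fv_tm s \<union> fv_tm t"
| "fv (Neg p) = fv p"
| "fv (Conj p q) = fv p \<union> fv q"
| "fv (Disj p q) = fv p \<union> fv q"
| "fv (Imp p q) = fv p \<union> fv q"
| "fv (Ex x p) = fv p - {x}"
| "fv (All x p) = fv p - {x}"

definition closed :: "('f, 'r) fm \<Rightarrow> bool" where
  "closed p \<longleftrightarrow> fv p = {}"

fun eval_tm :: "('f \<Rightarrow> 'u list \<Rightarrow> 'u) \<Rightarrow> (nat \<Rightarrow> 'u) \<Rightarrow> 'f tm \<Rightarrow> 'u" where
  "eval_tm F e (Var n) = e n"
| "eval_tm F e (App f ts) = F f (map (eval_tm F e) ts)"

fun sat :: "('f \<Rightarrow> 'u list \<Rightarrow> 'u) \<Rightarrow> ('r \<Rightarrow> 'u list \<Rightarrow> bool) \<Rightarrow> (nat \<Rightarrow> 'u)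
             \<Rightarrow> ('f, 'r) fm \<Rightarrow> bool" where
  "sat F R e FF = False"
| "sat F R e TT = True"
| "sat F R e (Atom r ts) = R r (map (eval_tm F e) ts)"
| "sat F R e (Eq s t) = (eval_tm F e s = eval_tm F e t)"
| "sat F R e (Neg p) = (\<not> sat F R e p)"
| "sat F R e (Conj p q) = (sat F R e p \<and> sat F R e q)"
| "sat F R e (Disj p q) = (sat F R e p \<or> sat F R e q)"
| "sat F R e (Imp p q) = (sat F R e p \<longrightarrow> sat F R e q)"
| "sat F R e (Ex x p) = (\<exists>a. sat F R (e(x := a)) p)"
| "sat F R e (All x p) = (\<forall>a. sat F R (e(x := a)) p)"

definition valid :: "'u itself \<Rightarrow> ('f, 'r) fm \<Rightarrow> bool" where
  "valid U p \<longleftrightarrow> (\<forall>(F :: 'f \<Rightarrow> 'u list \<Rightarrow> 'u) R (e :: nat \<Rightarrow> 'u). sat F R e p)"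

definition entails :: "'u itself \<Rightarrow> ('f, 'r) fm \<Rightarrow> ('f, 'r) fm \<Rightarrow> bool" where
  "entails U A B \<longleftrightarrow> valid U (Imp A B)"

text \<open>\<Sigma> consists of all symbols of types 'f, 'r; \<Sigma> \<uplus> \<Sigma>' is represented by
  pairs (a, False) (= a) and (a, True) (= a').\<close>
type_synonym ('f, 'r) fm2 = "('f \<times> bool, 'r \<times> bool) fm"

definition unprimed :: "('f, 'r) fm \<Rightarrow> ('f, 'r) fm2" where
  "unprimed p = map_fm (\<lambda>f. (f, False)) (\<lambda>r. (r, False)) p"

definition primed :: "('f, 'r) fm \<Rightarrow> ('f, 'r) fm2" where
  "primed p = map_fm (\<lambda>f. (f, True)) (\<lambda>r. (r, True)) p"

text \<open>tau inverse: swap each symbol with its primed counterpart.\<close>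
definition swap :: "('f, 'r) fm2 \<Rightarrow> ('f, 'r) fm2" where
  "swap p = map_fm (\<lambda>(f, b). (f, \<not> b)) (\<lambda>(r, b). (r, \<not> b)) p"

type_synonym ('f, 'r) problem = "('f, 'r) fm \<times> ('f, 'r) fm2 \<times> ('f, 'r) fm"

definition safety_problem :: "('f, 'r) problem \<Rightarrow> bool" where
  "safety_problem \<Pi> = (case \<Pi> of (\<iota>, \<tau>, \<beta>) \<Rightarrow> closed \<iota> \<and> closed \<tau> \<and> closed \<beta>)"

definition safe_inductive_invariant :: "'u itself \<Rightarrow> ('f, 'r) fm \<Rightarrow> ('f, 'r) problem \<Rightarrow> bool" where
  "safe_inductive_invariant U \<phi> \<Pi> = (case \<Pi> of (\<iota>, \<tau>, \<beta>) \<Rightarrow>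
      closed \<phi> \<and> entails U \<iota> \<phi> \<and> entails U (Conj (unprimed \<phi>) \<tau>) (primed \<phi>)
      \<and> entails U \<phi> (Neg \<beta>))"

text \<open>A proof tree; each node records its conclusion, the rule applied and
  (for Ind, Cons, Inc) the formula \<phi> of that rule instance.\<close>
datatype ('f, 'r) fbi_proof =
    PInd "('f, 'r) problem" "('f, 'r) fm"
  | PCons "('f, 'r) problem" "('f, 'r) fm" "('f, 'r) fbi_proof"
  | PInc "('f, 'r) problem" "('f, 'r) fm" "('f, 'r) fbi_proof" "('f, 'r) fbi_proof"
  | PRev "('f, 'r) problem" "('f, 'r) fbi_proof"

fun root :: "('f, 'r) fbi_proof \<Rightarrow> ('f, 'r) problem" where
  "root (PInd \<Pi> _) = \<Pi>"
| "root (PCons \<Pi> _ _) = \<Pi>"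
| "root (PInc \<Pi> _ _ _) = \<Pi>"
| "root (PRev \<Pi> _) = \<Pi>"

fun is_proof :: "'u itself \<Rightarrow> ('f, 'r) fm set \<Rightarrow> ('f, 'r) fbi_proof \<Rightarrow> bool" where
  "is_proof U PP (PInd (\<iota>, \<tau>, \<beta>) \<phi>) \<longleftrightarrow>
     safety_problem (\<iota>, \<tau>, \<beta>) \<and> closed \<phi> \<and> \<phi> \<in> PP \<and> \<beta> = Neg \<phi> \<and>
     entails U \<iota> \<phi> \<and> entails U (Conj (unprimed \<phi>) \<tau>) (primed \<phi>)"
| "is_proof U PP (PCons (\<iota>, \<tau>, \<beta>) \<phi> P) \<longleftrightarrow>
     safety_problem (\<iota>, \<tau>, \<beta>) \<and> closed \<phi> \<and> root P = (\<iota>, \<tau>, Neg \<phi>) \<and>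
     entails U \<phi> (Neg \<beta>) \<and> is_proof U PP P"
| "is_proof U PP (PInc (\<iota>, \<tau>, \<beta>) \<phi> P1 P2) \<longleftrightarrow>
     safety_problem (\<iota>, \<tau>, \<beta>) \<and> closed \<phi> \<and> root P1 = (\<iota>, \<tau>, Neg \<phi>) \<and>
     root P2 = (Conj \<iota> \<phi>, Conj (Conj \<tau> (unprimed \<phi>)) (primed \<phi>), Conj \<beta> \<phi>) \<and>
     is_proof U PP P1 \<and> is_proof U PP P2"
| "is_proof U PP (PRev (\<iota>, \<tau>, \<beta>) P) \<longleftrightarrow>
     safety_problem (\<iota>, \<tau>, \<beta>) \<and> root P = (\<beta>, swap \<tau>, \<iota>) \<and> is_proof U PP P"

fun Inv :: "('f, 'r) fbi_proof \<Rightarrow> ('f, 'r) fm" where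
  "Inv (PInd _ \<phi>) = \<phi>"
| "Inv (PCons _ _ P) = Inv P"
| "Inv (PInc _ _ P1 P2) = Conj (Inv P1) (Inv P2)"
| "Inv (PRev _ P) = Neg (Inv P)"

fun num_ind :: "('f, 'r) fbi_proof \<Rightarrow> nat" where
  "num_ind (PInd _ _) = 1"
| "num_ind (PCons _ _ P) = num_ind P"
| "num_ind (PInc _ _ P1 P2) = num_ind P1 + num_ind P2"
| "num_ind (PRev _ P) = num_ind P"

inductive bool_comb :: "('f, 'r) fm set \<Rightarrow> ('f, 'r) fm \<Rightarrow> bool" for S where
  base: "\<phi> \<in> S \<Longrightarrow> bool_comb S \<phi>"
| neg: "bool_comb S \<phi> \<Longrightarrow> bool_comb S (Neg \<phi>)"
| conj: "bool_comb S \<phi> \<Longrightarrow> bool_comb S \<psi> \<Longrightarrow> bool_comb S (Conj \<phi> \<psi>)"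
| disj: "bool_comb S \<phi> \<Longrightarrow> bool_comb S \<psi> \<Longrightarrow> bool_comb S (Disj \<phi> \<psi>)"
| imp: "bool_comb S \<phi> \<Longrightarrow> bool_comb S \<psi> \<Longrightarrow> bool_comb S (Imp \<phi> \<psi>)"

end

theory Submission
  imports Defs
begin

lemma eval_tm_map: "eval_tm F e (map_tm g t) = eval_tm (\<lambda>f. F (g f)) e t"
  proof (induction t)
  case (App f ts)
  have "map (eval_tm F e \<circ> map_tm g) ts = map (eval_tm (\<lambda>f. F (g f)) e) ts"
    by (rule map_cong) (simp_all add: App)
  then show ?case by (simp only: tm.map eval_tm.simps map_map)
qed simp

lemma sat_map: "sat F R e (map_fm g h p) = sat (\<lambda>f. F (g f)) (\<lambda>r. R (h r)) e p"
  by (induction p arbitrary: e) (auto simp: eval_tm_map comp_def)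

lemma sat_unprimed: "sat F R e (unprimed p) = sat (\<lambda>f. F (f,False)) (\<lambda>r. R (r,False)) e p"
  unfolding unprimed_def by (simp add: sat_map)

lemma sat_primed: "sat F R e (primed p) = sat (\<lambda>f. F (f,True)) (\<lambda>r. R (r,True)) e p"
  unfolding primed_def by (simp add: sat_map)

lemma sat_swap: "sat F R e (swap p) = sat (\<lambda>x. F (fst x, \<not> snd x)) (\<lambda>x. R (fst x, \<not> snd x)) e p"
  unfolding swap_def by (simp add: sat_map case_prod_beta)

lemma swap_swap_F: "(\<lambda>x. F (fst x, snd x)) = F"
  by auto

lemma bool_comb_mono: "bool_comb S \<phi> \<Longrightarrow> S \<subseteq> T \<Longrightarrow> bool_comb T \<phi>"
  by (induction rule: bool_comb.induct) (auto intro: bool_comb.intros)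

lemma main:
  fixes U :: "'u itself" and P :: "('f, 'r) fbi_proof"
  shows "is_proof U PP P \<Longrightarrow> root P = (\<iota>, \<tau>, \<beta>) \<Longrightarrow>
   closed (Inv P) \<and> entails U \<iota> (Inv P) \<and> entails U (Conj (unprimed (Inv P)) \<tau>) (primed (Inv P))
   \<and> entails U (Inv P) (Neg \<beta>)"
proof (induction P arbitrary: \<iota> \<tau> \<beta>)
  case (PInd \<Pi> \<phi>)
  then show ?case by (auto simp: entails_def valid_def)
next
  case (PCons \<Pi> \<phi> P)
  then have ih: "closed (Inv P) \<and> entails U \<iota> (Inv P) \<and> entails U (Conj (unprimed (Inv P)) \<tau>) (primed (Inv P))
   \<and> entails U (Inv P) (Neg (Neg \<phi>))" and e: "entails U \<phi> (Neg \<beta>)" by auto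
  then show ?case by (auto simp: entails_def valid_def)
next
  case (PInc \<Pi> \<phi> P1 P2)
  then have ih1: "closed (Inv P1) \<and> entails U \<iota> (Inv P1) \<and> entails U (Conj (unprimed (Inv P1)) \<tau>) (primed (Inv P1))
   \<and> entails U (Inv P1) (Neg (Neg \<phi>))"
   and ih2: "closed (Inv P2) \<and> entails U (Conj \<iota> \<phi>) (Inv P2) \<and>
     entails U (Conj (unprimed (Inv P2)) (Conj (Conj \<tau> (unprimed \<phi>)) (primed \<phi>))) (primed (Inv P2))
   \<and> entails U (Inv P2) (Neg (Conj \<beta> \<phi>))" by auto
  show ?case
    using ih1 ih2 unfolding entails_def valid_def
    by (auto simp: closed_def sat_unprimed sat_primed) blast+
next
  case (PRev \<Pi> P)
  then have ih: "closed (Inv P) \<and> entails U \<beta> (Inv P) \<and> entails U (Conj (unprimed (Inv P)) (swap \<tau>)) (primed (Inv P))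
   \<and> entails U (Inv P) (Neg \<iota>)" by auto
  have tr: "entails U (Conj (unprimed (Neg (Inv P))) \<tau>) (primed (Neg (Inv P)))"
    unfolding entails_def valid_def
  proof (intro allI)
    fix F :: "'f \<times> bool \<Rightarrow> 'u list \<Rightarrow> 'u" and R :: "'r \<times> bool \<Rightarrow> 'u list \<Rightarrow> bool" and e
    have "sat (\<lambda>x. F (fst x, \<not> snd x)) (\<lambda>x. R (fst x, \<not> snd x)) e
          (Imp (Conj (unprimed (Inv P)) (swap \<tau>)) (primed (Inv P)))"
      using ih unfolding entails_def valid_def by blast
    then show "sat F R e (Imp (Conj (unprimed (Neg (Inv P))) \<tau>) (primed (Neg (Inv P))))"
      by (simp add: sat_unprimed sat_primed sat_swap swap_swap_F) blast
  qed
  then show ?case using ih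
    by (auto simp: entails_def valid_def closed_def)
qed

lemma comb:
  "is_proof U PP P \<Longrightarrow> \<exists>ps. length ps = num_ind P \<and> set ps \<subseteq> PP \<and> bool_comb (set ps) (Inv P)"
proof (induction P)
  case (PInd \<Pi> \<phi>)
  then show ?case
    by (cases \<Pi>) (auto intro!: exI[of _ "[\<phi>]"] bool_comb.base)
next
  case (PCons \<Pi> \<phi> P)
  then show ?case by (cases \<Pi>) auto
next
  case (PInc \<Pi> \<phi> P1 P2)
  then obtain ps1 ps2 where "length ps1 = num_ind P1" "set ps1 \<subseteq> PP" "bool_comb (set ps1) (Inv P1)"
    "length ps2 = num_ind P2" "set ps2 \<subseteq> PP" "bool_comb (set ps2) (Inv P2)"
    by (cases \<Pi>) auto
  then show ?case
    by (intro exI[of _ "ps1 @ ps2"]) (auto intro!: bool_comb.conj elim!: bool_comb_mono)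
next
  case (PRev \<Pi> P)
  then show ?case by (cases \<Pi>) (auto intro: bool_comb.neg)
qed

theorem theorem4p13:
  fixes U :: "'u itself" and PP :: "('f, 'r) fm set" and P :: "('f, 'r) fbi_proof"
    and \<Pi> :: "('f, 'r) problem" and n :: nat
  assumes "\<forall>\<phi>\<in>PP. closed \<phi>"
    and "safety_problem \<Pi>"
    and "is_proof U PP P"
    and "root P = \<Pi>"
    and "num_ind P = n"
  shows "safe_inductive_invariant U (Inv P) \<Pi> \<and>
         (\<exists>ps. length ps = n \<and> set ps \<subseteq> PP \<and> bool_comb (set ps) (Inv P))"
proof -
  obtain \<iota> \<tau> \<beta> where p: "\<Pi> = (\<iota>, \<tau>, \<beta>)" by (cases \<Pi>) auto
  show ?thesis
    using main[OF assms(3), of \<iota> \<tau> \<beta>] comb[OF assms(3)] assms(4,5) p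
    by (auto simp: safe_inductive_invariant_def)
qed

end
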